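(* For sufficiently large absolute constants $a$ and $b$ the following holds. Let $A$ be a finite multiset of $n$ points in $\mathbb{R}^d$ with mean $\mu$, and $\varepsilon,\delta\in(0,1)$. Let $k=b\log\delta^{-1}$ and for $i=1,\dots,k$ let $\hat\mu_i$ be the average of $a\varepsilon^{-1}$ points drawn independently and uniformly at random from $A$ (all draws independent). Let $r=\frac{1}{11}\sqrt{\frac{\varepsilon\,\mathrm{Opt}}{n}}$ and let $G=\{i:\|\hat\mu_i-\mu\|\le r\}$. Then with probability at least $1-\delta$ the event $\mathcal{E}=\{|G|\ge\frac{7}{10}\,b\log\delta^{-1}\}$ holds.
   Context: $\mu=\frac1n\sum_{p\in A}p$ and $\mathrm{Opt}=\sum_{p\in A}\|p-\mu\|^2$ (Euclidean norm). Integrality of $k$ and $a\varepsilon^{-1}$ is ignored. *)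

theory Defs
  imports "HOL-Probability.Probability"
begin

text \<open>Points of R^d are represented as functions nat => real, only coordinates c < d matter.
  A multiset of n points is an indexed family P 0, ..., P (n-1).\<close>

definition enorm :: "nat \<Rightarrow> (nat \<Rightarrow> real) \<Rightarrow> real" where
  "enorm d x = sqrt (\<Sum>c<d. (x c)\<^sup>2)"

definition vdiff :: "(nat \<Rightarrow> real) \<Rightarrow> (nat \<Rightarrow> real) \<Rightarrow> (nat \<Rightarrow> real)" where
  "vdiff x y = (\<lambda>c. x c - y c)"

definition pmean :: "nat \<Rightarrow> (nat \<Rightarrow> nat \<Rightarrow> real) \<Rightarrow> (nat \<Rightarrow> real)" where
  "pmean n P = (\<lambda>c. (\<Sum>j<n. P j c) / real n)"

definition Opt :: "nat \<Rightarrow> nat \<Rightarrow> (nat \<Rightarrow> nat \<Rightarrow> real) \<Rightarrow> real" where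
  "Opt d n P = (\<Sum>j<n. (enorm d (vdiff (P j) (pmean n P)))\<^sup>2)"

text \<open>Sample space: omega (i,t) is the index of the t-th point drawn for the i-th estimate,
  all draws independent and uniform over {..<n}.\<close>
definition draws :: "nat \<Rightarrow> nat \<Rightarrow> nat \<Rightarrow> (nat \<times> nat \<Rightarrow> nat) pmf" where
  "draws n k m = Pi_pmf ({..<k} \<times> {..<m}) 0 (\<lambda>_. pmf_of_set {..<n})"

definition est :: "(nat \<Rightarrow> nat \<Rightarrow> real) \<Rightarrow> nat \<Rightarrow> (nat \<times> nat \<Rightarrow> nat) \<Rightarrow> nat \<Rightarrow> (nat \<Rightarrow> real)" where
  "est P m \<omega> i = (\<lambda>c. (\<Sum>t<m. P (\<omega> (i, t)) c) / real m)"

definition goodset :: "nat \<Rightarrow> nat \<Rightarrow> (nat \<Rightarrow> nat \<Rightarrow> real) \<Rightarrow> nat \<Rightarrow> nat \<Rightarrow> real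
    \<Rightarrow> (nat \<times> nat \<Rightarrow> nat) \<Rightarrow> nat set" where
  "goodset d n P k m r \<omega> = {i \<in> {..<k}. enorm d (vdiff (est P m \<omega> i) (pmean n P)) \<le> r}"

end

theory Submission imports Defs begin

lemma finite_set_Q: assumes "n \<ge> 1" shows "finite (set_pmf (Pi_pmf {..<(m::nat)} (0::nat) (\<lambda>_. pmf_of_set {..<(n::nat)})))"
proof -
  have "set_pmf (Pi_pmf {..<(m::nat)} (0::nat) (\<lambda>_. pmf_of_set {..<(n::nat)})) \<subseteq> PiE_dflt {..<m} 0 (\<lambda>_. set_pmf (pmf_of_set {..<n}))"
    using set_Pi_pmf_subset'[of "{..<m}" 0 "\<lambda>_. pmf_of_set {..<n}"] by (simp add: o_def)
  moreover have "finite (PiE_dflt {..<(m::nat)} (0::nat) (\<lambda>_. set_pmf (pmf_of_set {..<n})))"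
    using assms by (intro finite_PiE_dflt) (auto simp: lessThan_empty_iff)
  ultimately show ?thesis by (rule finite_subset)
qed

lemma exp_comp:
  fixes h :: "nat \<Rightarrow> real"
  assumes "n \<ge> 1" "s < m"
  shows "measure_pmf.expectation (Pi_pmf {..<(m::nat)} (0::nat) (\<lambda>_. pmf_of_set {..<(n::nat)})) (\<lambda>g. h (g s))
     = (\<Sum>j<n. h j) / real n"
proof -
  have "measure_pmf.expectation (Pi_pmf {..<(m::nat)} (0::nat) (\<lambda>_. pmf_of_set {..<(n::nat)})) (\<lambda>g. h (g s))
     = measure_pmf.expectation (map_pmf (\<lambda>g. g s) (Pi_pmf {..<(m::nat)} (0::nat) (\<lambda>_. pmf_of_set {..<(n::nat)}))) h"
    by simp
  also have "map_pmf (\<lambda>g. g s) (Pi_pmf {..<(m::nat)} (0::nat) (\<lambda>_. pmf_of_set {..<(n::nat)})) = pmf_of_set {..<n}"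
    using assms by (subst Pi_pmf_component) auto
  also have "measure_pmf.expectation (pmf_of_set {..<n}) h = (\<Sum>j<n. h j) / real n"
    using assms by (subst integral_pmf_of_set) (auto simp: lessThan_empty_iff)
  finally show ?thesis .
qed

lemma exp_pair:
  fixes h :: "nat \<Rightarrow> real"
  assumes "n \<ge> 1" "s < m" "t < m" "s \<noteq> t"
  shows "measure_pmf.expectation (Pi_pmf {..<(m::nat)} (0::nat) (\<lambda>_. pmf_of_set {..<(n::nat)})) (\<lambda>g. h (g s) * h (g t))
     = ((\<Sum>j<n. h j) / real n) * ((\<Sum>j<n. h j) / real n)"
proof -
  let ?Q = "Pi_pmf {..<(m::nat)} (0::nat) (\<lambda>_. pmf_of_set {..<(n::nat)})"
  have ind: "prob_space.indep_vars (measure_pmf ?Q) (\<lambda>_. count_space UNIV) (\<lambda>x f. f x) {..<m}"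
    by (rule indep_vars_Pi_pmf) simp
  have ind2: "prob_space.indep_vars (measure_pmf ?Q) (\<lambda>_. count_space UNIV) (\<lambda>x f. f x) {s,t}"
    by (rule prob_space.indep_vars_subset[OF measure_pmf.prob_space_axioms ind]) (use assms in auto)
  have ind3: "prob_space.indep_vars (measure_pmf ?Q) (\<lambda>_. borel) (\<lambda>i g. h (g i)) {s,t}"
    using prob_space.indep_vars_compose2[OF measure_pmf.prob_space_axioms ind2, of "\<lambda>_. h" "\<lambda>_. borel"]
    by simp
  have "measure_pmf.expectation ?Q (\<lambda>g. \<Prod>i\<in>{s,t}. h (g i)) = (\<Prod>i\<in>{s,t}. measure_pmf.expectation ?Q (\<lambda>g. h (g i)))"
    by (rule prob_space.indep_vars_lebesgue_integral[OF measure_pmf.prob_space_axioms])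
       (use ind3 assms in \<open>auto intro!: integrable_measure_pmf_finite finite_set_Q\<close>)
  then show ?thesis using assms exp_comp[of n s m h] exp_comp[of n t m h] by simp
qed

lemma enorm_sq: "(enorm d x)^2 = (\<Sum>c<d. (x c)^2)"
  unfolding enorm_def by (simp add: sum_nonneg)

lemma exp_sq:
  fixes P :: "nat \<Rightarrow> nat \<Rightarrow> real"
  assumes n: "n \<ge> 1" and m: "m \<ge> 1"
  shows "measure_pmf.expectation (Pi_pmf {..<(m::nat)} (0::nat) (\<lambda>_. pmf_of_set {..<(n::nat)}))
     (\<lambda>g. (enorm d (vdiff (\<lambda>c. (\<Sum>t<m. P (g t) c) / real m) (pmean n P)))^2) = Opt d n P / (real n * real m)"
proof -
  let ?Q = "Pi_pmf {..<(m::nat)} (0::nat) (\<lambda>_. pmf_of_set {..<(n::nat)})"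
  define \<mu> where "\<mu> = pmean n P"
  define Y where "Y c j = P j c - \<mu> c" for c j
  define V where "V c = (\<Sum>j<n. (Y c j)^2) / real n" for c
  have int: "integrable (measure_pmf ?Q) f" for f :: "_ \<Rightarrow> real"
    by (intro integrable_measure_pmf_finite finite_set_Q n)
  have sumY0: "(\<Sum>j<n. Y c j) = 0" for c
    using n by (simp add: Y_def \<mu>_def pmean_def sum_subtractf)
  have eq: "(enorm d (vdiff (\<lambda>c. (\<Sum>t<m. P (g t) c) / real m) \<mu>))^2
      = (\<Sum>c<d. \<Sum>s<m. \<Sum>t<m. Y c (g s) * Y c (g t)) / (real m)^2" for g
  proof -
    have v: "vdiff (\<lambda>c. (\<Sum>t<m. P (g t) c) / real m) \<mu> c = (\<Sum>t<m. Y c (g t)) / real m" for c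
      using m by (simp add: vdiff_def Y_def sum_subtractf field_simps)
    have sq: "((\<Sum>t<m. Y c (g t)) / real m)^2 = (\<Sum>s<m. \<Sum>t<m. Y c (g s) * Y c (g t)) / (real m)^2" for c
      by (simp add: power_divide power2_eq_square sum_product)
    show ?thesis unfolding enorm_sq v sq by (simp add: sum_divide_distrib)
  qed
  have pair: "measure_pmf.expectation ?Q (\<lambda>g. Y c (g s) * Y c (g t)) = (if s = t then V c else 0)"
    if "s < m" "t < m" for c s t
  proof (cases "s = t")
    case True
    then show ?thesis using exp_comp[OF n that(1), of "\<lambda>j. (Y c j)^2"]
      by (simp add: V_def power2_eq_square)
  next
    case False
    then show ?thesis using exp_pair[OF n that False, of "Y c"] sumY0 by simp
  qed
  have "measure_pmf.expectation ?Q (\<lambda>g. (enorm d (vdiff (\<lambda>c. (\<Sum>t<m. P (g t) c) / real m) \<mu>))^2)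
      = (\<Sum>c<d. \<Sum>s<m. \<Sum>t<m. measure_pmf.expectation ?Q (\<lambda>g. Y c (g s) * Y c (g t))) / (real m)^2"
    unfolding eq by (simp add: int Bochner_Integration.integral_sum)
  also have "\<dots> = (\<Sum>c<d. \<Sum>s<m. \<Sum>t<m. (if s = t then V c else 0)) / (real m)^2"
    by (simp add: pair)
  also have "\<dots> = (\<Sum>c<d. real m * V c) / (real m)^2"
    by simp
  also have "\<dots> = (\<Sum>c<d. V c) / real m"
    using m by (simp add: sum_distrib_left[symmetric] power2_eq_square)
  also have "\<dots> = Opt d n P / (real n * real m)"
    unfolding Opt_def V_def enorm_sq \<mu>_def[symmetric]
    by (simp add: vdiff_def Y_def sum_divide_distrib[symmetric] sum.swap[of _ "{..<d}"])
  finally show ?thesis by (simp add: \<mu>_def)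
qed

lemma Opt_nonneg: "Opt d n P \<ge> 0"
  unfolding Opt_def by (simp add: sum_nonneg)

lemma bad_prob:
  fixes P :: "nat \<Rightarrow> nat \<Rightarrow> real"
  assumes n: "n \<ge> 1" and m: "m \<ge> 1" and a: "a > 0" and e: "\<epsilon> > 0" and me: "real m \<ge> a / \<epsilon>"
    and r: "r = (1/11) * sqrt (\<epsilon> * Opt d n P / real n)"
  shows "measure_pmf.prob (Pi_pmf {..<(m::nat)} (0::nat) (\<lambda>_. pmf_of_set {..<(n::nat)}))
     {g. r < enorm d (vdiff (\<lambda>c. (\<Sum>t<m. P (g t) c) / real m) (pmean n P))} \<le> 121 / a"
proof -
  let ?Q = "Pi_pmf {..<(m::nat)} (0::nat) (\<lambda>_. pmf_of_set {..<(n::nat)})"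
  define X where "X g = (enorm d (vdiff (\<lambda>c. (\<Sum>t<m. P (g t) c) / real m) (pmean n P)))^2" for g
  have int: "integrable (measure_pmf ?Q) f" for f :: "_ \<Rightarrow> real"
    by (intro integrable_measure_pmf_finite finite_set_Q n)
  have EX: "measure_pmf.expectation ?Q X = Opt d n P / (real n * real m)"
    unfolding X_def by (rule exp_sq[OF n m])
  have en0: "enorm d x \<ge> 0" for d x unfolding enorm_def by (simp add: sum_nonneg)
  show ?thesis
  proof (cases "Opt d n P = 0")
    case True
    have "AE g in measure_pmf ?Q. X g = 0"
      using EX True by (subst integral_nonneg_eq_0_iff_AE[symmetric]) (auto simp: int X_def)
    then have "\<forall>g\<in>set_pmf ?Q. X g = 0" by (simp add: AE_measure_pmf_iff)
    then have "set_pmf ?Q \<inter> {g. r < enorm d (vdiff (\<lambda>c. (\<Sum>t<m. P (g t) c) / real m) (pmean n P))} = {}"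
      using True r by (auto simp: X_def)
    then have "measure_pmf.prob ?Q {g. r < enorm d (vdiff (\<lambda>c. (\<Sum>t<m. P (g t) c) / real m) (pmean n P))} = 0"
      by (simp add: measure_pmf_zero_iff)
    then show ?thesis using a by simp
  next
    case False
    then have Opos: "Opt d n P > 0" using Opt_nonneg[of d n P] by simp
    have r2: "r^2 = \<epsilon> * Opt d n P / real n / 121"
    proof -
      have "(sqrt (\<epsilon> * Opt d n P / real n))^2 = \<epsilon> * Opt d n P / real n"
        using e Opos n by (intro real_sqrt_pow2) simp
      moreover have "\<bar>\<epsilon> * Opt d n P\<bar> = \<epsilon> * Opt d n P" using e Opos by simp
      ultimately show ?thesis unfolding r power_mult_distrib by (simp add: power2_eq_square mult.commute)
    qed
    have rpos: "r^2 > 0" using r2 e Opos n by simp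
    have "measure_pmf.prob ?Q {g. r < enorm d (vdiff (\<lambda>c. (\<Sum>t<m. P (g t) c) / real m) (pmean n P))}
        \<le> measure_pmf.prob ?Q {g \<in> space (measure_pmf ?Q). X g \<ge> r^2}"
    proof (rule measure_pmf.finite_measure_mono)
      show "{g. r < enorm d (vdiff (\<lambda>c. (\<Sum>t<m. P (g t) c) / real m) (pmean n P))}
          \<subseteq> {g \<in> space (measure_pmf ?Q). X g \<ge> r^2}"
      proof safe
        fix g assume "r < enorm d (vdiff (\<lambda>c. (\<Sum>t<m. P (g t) c) / real m) (pmean n P))"
        moreover have "r \<ge> 0" unfolding r using e Opos n by (intro mult_nonneg_nonneg real_sqrt_ge_zero) auto
        ultimately show "r^2 \<le> X g" unfolding X_def
          by (intro power_mono) auto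
      qed simp
    qed simp
    also have "\<dots> \<le> measure_pmf.expectation ?Q X / r^2"
      by (rule integral_Markov_inequality_measure) (use rpos in \<open>auto simp: int X_def\<close>)
    also have "\<dots> = 121 / (real m * \<epsilon>)"
      unfolding EX r2 using Opos n e m by (simp add: field_simps)
    also have "\<dots> \<le> 121 / a"
    proof -
      have "a \<le> real m * \<epsilon>" using me e by (simp add: field_simps)
      then show ?thesis using a by (intro divide_left_mono) auto
    qed
    finally show ?thesis .
  qed
qed

definition regr :: "nat \<Rightarrow> (nat \<Rightarrow> nat \<Rightarrow> nat) \<Rightarrow> (nat \<times> nat \<Rightarrow> nat)" where
  "regr k F = (\<lambda>p. if fst p < k then F (fst p) (snd p) else 0)"

lemma regroup:
  assumes n: "n \<ge> 1"
  shows "draws n k m = map_pmf (regr k) (Pi_pmf {..<k} (\<lambda>_. 0) (\<lambda>_. Pi_pmf {..<m} 0 (\<lambda>_. pmf_of_set {..<n})))"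
proof -
  define D where "D = PiE_dflt {..<m} (0::nat) (\<lambda>_. {..<n})"
  define E where "E = PiE_dflt {..<k} (\<lambda>_. 0) (\<lambda>_. D)"
  have nn: "{..<n} \<noteq> {}" using n by (auto simp: lessThan_empty_iff)
  have Dfin: "finite D" "D \<noteq> {}" unfolding D_def using nn by (auto intro!: finite_PiE_dflt)
  have Efin: "finite E" "E \<noteq> {}" unfolding E_def using Dfin by (auto intro!: finite_PiE_dflt)
  have 1: "draws n k m = pmf_of_set (PiE_dflt ({..<k} \<times> {..<m}) 0 (\<lambda>_. {..<n}))"
    unfolding draws_def using nn by (intro Pi_pmf_of_set) auto
  have 2: "Pi_pmf {..<m} 0 (\<lambda>_. pmf_of_set {..<n}) = pmf_of_set D"
    unfolding D_def using nn by (intro Pi_pmf_of_set) auto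
  have 3: "Pi_pmf {..<k} (\<lambda>_. 0) (\<lambda>_. pmf_of_set D) = pmf_of_set E"
    unfolding E_def using Dfin by (intro Pi_pmf_of_set) auto
  have inj: "inj_on (regr k) E"
  proof (rule inj_onI)
    fix F G assume F: "F \<in> E" and G: "G \<in> E" and eq: "regr k F = regr k G"
    show "F = G"
    proof (rule ext)
      fix i show "F i = G i"
      proof (cases "i < k")
        case True
        show ?thesis
        proof (rule ext)
          fix t show "F i t = G i t"
            using fun_cong[OF eq, of "(i,t)"] True by (simp add: regr_def)
        qed
      next
        case False
        then show ?thesis using F G by (auto simp: E_def PiE_dflt_def)
      qed
    qed
  qed
  have img: "regr k ` E = PiE_dflt ({..<k} \<times> {..<m}) 0 (\<lambda>_. {..<n})"
  proof safe
    fix F assume "F \<in> E"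
    then show "regr k F \<in> PiE_dflt ({..<k} \<times> {..<m}) 0 (\<lambda>_. {..<n})"
      by (auto simp: E_def D_def PiE_dflt_def regr_def)
  next
    fix \<omega> assume w: "\<omega> \<in> PiE_dflt ({..<k} \<times> {..<m}) 0 (\<lambda>_. {..<n})"
    define F where "F i = (if i < k then (\<lambda>t. \<omega> (i,t)) else (\<lambda>_. 0))" for i
    have "F \<in> E" using w by (auto simp: E_def D_def PiE_dflt_def F_def)
    moreover have "\<omega> = regr k F"
      using w by (auto simp: PiE_dflt_def F_def regr_def fun_eq_iff)
    ultimately show "\<omega> \<in> regr k ` E" by blast
  qed
  show ?thesis
    unfolding 1 2 3 using inj Efin by (subst map_pmf_of_set_inj) (auto simp: img)
qed

lemma all_bad:
  fixes Q :: "'a pmf" and B :: "'a set"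
  assumes S: "S \<subseteq> {..<(k::nat)}" and p: "measure_pmf.prob Q B \<le> p"
  shows "measure_pmf.prob (Pi_pmf {..<k} dflt (\<lambda>_. Q)) {F. \<forall>i\<in>S. F i \<in> B} \<le> p ^ card S"
proof -
  have "{F. \<forall>i\<in>S. F i \<in> B} = Pi {..<k} (\<lambda>i. if i \<in> S then B else UNIV)"
    using S by (auto simp: Pi_def)
  then have "measure_pmf.prob (Pi_pmf {..<k} dflt (\<lambda>_. Q)) {F. \<forall>i\<in>S. F i \<in> B}
      = (\<Prod>i\<in>{..<k}. measure_pmf.prob Q (if i \<in> S then B else UNIV))"
    by (simp add: measure_Pi_pmf_Pi)
  also have "\<dots> = (\<Prod>i\<in>{..<k}. if i \<in> S then measure_pmf.prob Q B else 1)"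
    by (intro prod.cong) auto
  also have "\<dots> = measure_pmf.prob Q B ^ card S"
    using S by (simp add: prod.If_cases Int_absorb1)
  also have "\<dots> \<le> p ^ card S"
    using p by (intro power_mono) auto
  finally show ?thesis .
qed

theorem lemma3p2:
  shows "\<exists>a0 b0 :: real. \<forall>a \<ge> a0. \<forall>b \<ge> b0.
     \<forall>(d::nat) (n::nat) (P :: nat \<Rightarrow> nat \<Rightarrow> real) (\<epsilon>::real) (\<delta>::real).
       n \<ge> 1 \<longrightarrow> 0 < \<epsilon> \<longrightarrow> \<epsilon> < 1 \<longrightarrow> 0 < \<delta> \<longrightarrow> \<delta> < 1 \<longrightarrow>
       (let k = nat \<lceil>b * ln (1 / \<delta>)\<rceil>;
            m = nat \<lceil>a / \<epsilon>\<rceil>;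
            r = (1 / 11) * sqrt (\<epsilon> * Opt d n P / real n)
        in measure_pmf.prob (draws n k m)
             {\<omega>. real (card (goodset d n P k m r \<omega>)) \<ge> 7 / 10 * b * ln (1 / \<delta>)}
           \<ge> 1 - \<delta>)"
unfolding Let_def proof (intro exI[of _ "121 * 4^10"] exI[of _ 1] allI impI, goal_cases)
  case (1 a b d n P \<epsilon> \<delta>)
  then have a: "a \<ge> 121 * 4^10" and b: "b \<ge> 1" and n: "n \<ge> 1" and e: "0 < \<epsilon>" "\<epsilon> < 1"
    and dl: "0 < \<delta>" "\<delta> < 1" by auto
  define L where "L = ln (1 / \<delta>)"
  define k where "k = nat \<lceil>b * L\<rceil>"
  define m where "m = nat \<lceil>a / \<epsilon>\<rceil>"
  define r where "r = (1 / 11) * sqrt (\<epsilon> * Opt d n P / real n)"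
  have Lpos: "L > 0" unfolding L_def using dl by simp
  have apos: "a > 0" using a by simp
  have kL: "real k \<ge> b * L" unfolding k_def by linarith
  have mge: "real m \<ge> a / \<epsilon>" unfolding m_def by linarith
  have m1: "m \<ge> 1"
  proof -
    have "a / \<epsilon> > 0" using apos e by simp
    then show ?thesis using mge by linarith
  qed
  define Q where "Q = Pi_pmf {..<m} (0::nat) (\<lambda>_. pmf_of_set {..<n})"
  define G where "G = Pi_pmf {..<k} (\<lambda>_. 0) (\<lambda>_. Q)"
  define B where "B = {g. r < enorm d (vdiff (\<lambda>c. (\<Sum>t<m. P (g t) c) / real m) (pmean n P))}"
  define \<rho> :: real where "\<rho> = 1/4"
  have pB: "measure_pmf.prob Q B \<le> \<rho> ^ 10"
  proof -
    have "measure_pmf.prob Q B \<le> 121 / a"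
      unfolding Q_def B_def by (rule bad_prob[OF n m1 apos e(1) mge r_def])
    also have "\<dots> \<le> \<rho> ^ 10" using a by (simp add: \<rho>_def field_simps)
    finally show ?thesis .
  qed
  define T where "T = {\<omega>. real (card (goodset d n P k m r \<omega>)) \<ge> 7 / 10 * b * L}"
  have good: "goodset d n P k m r (regr k F) = {i\<in>{..<k}. F i \<notin> B}" for F
    unfolding goodset_def B_def est_def regr_def by auto
  define SS where "SS = {S. S \<subseteq> {..<k} \<and> 3 * k \<le> 10 * card S}"
  have cover: "UNIV - regr k -` T \<subseteq> (\<Union>S\<in>SS. {F. \<forall>i\<in>S. F i \<in> B})"
  proof
    fix F assume "F \<in> UNIV - regr k -` T"
    then have lt: "real (card {i\<in>{..<k}. F i \<notin> B}) < 7 / 10 * b * L"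
      by (auto simp: T_def good)
    define S where "S = {i\<in>{..<k}. F i \<in> B}"
    have "card {i\<in>{..<k}. F i \<notin> B} + card S = k"
    proof -
      have "card ({i\<in>{..<k}. F i \<notin> B} \<union> S) = card {i\<in>{..<k}. F i \<notin> B} + card S"
        unfolding S_def by (intro card_Un_disjoint) auto
      moreover have "{i\<in>{..<k}. F i \<notin> B} \<union> S = {..<k}" unfolding S_def by auto
      ultimately show ?thesis by simp
    qed
    then have "real (card S) > real k - 7 / 10 * b * L" using lt by linarith
    then have "real (3 * k) \<le> real (10 * card S)" using kL Lpos b by simp
    then have "3 * k \<le> 10 * card S" by linarith
    then have "S \<in> SS" unfolding SS_def S_def by auto
    moreover have "F \<in> {F. \<forall>i\<in>S. F i \<in> B}" unfolding S_def by auto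
    ultimately show "F \<in> (\<Union>S\<in>SS. {F. \<forall>i\<in>S. F i \<in> B})" by blast
  qed
  have finSS: "finite SS" unfolding SS_def by (rule finite_subset[of _ "Pow {..<k}"]) auto
  have "measure_pmf.prob G (UNIV - regr k -` T) \<le> measure_pmf.prob G (\<Union>S\<in>SS. {F. \<forall>i\<in>S. F i \<in> B})"
    using cover by (intro measure_pmf.finite_measure_mono) auto
  also have "\<dots> \<le> (\<Sum>S\<in>SS. measure_pmf.prob G {F. \<forall>i\<in>S. F i \<in> B})"
    by (intro measure_pmf.finite_measure_subadditive_finite finSS) auto
  also have "\<dots> \<le> (\<Sum>S\<in>SS. \<rho> ^ (3 * k))"
  proof (intro sum_mono)
    fix S assume S: "S \<in> SS"
    have "measure_pmf.prob G {F. \<forall>i\<in>S. F i \<in> B} \<le> (\<rho> ^ 10) ^ card S"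
      unfolding G_def by (rule all_bad) (use S pB in \<open>auto simp: SS_def\<close>)
    also have "\<dots> = \<rho> ^ (10 * card S)" by (simp add: power_mult)
    also have "\<dots> \<le> \<rho> ^ (3 * k)"
      using S by (intro power_decreasing) (auto simp: SS_def \<rho>_def)
    finally show "measure_pmf.prob G {F. \<forall>i\<in>S. F i \<in> B} \<le> \<rho> ^ (3 * k)" .
  qed
  also have "\<dots> \<le> real (card (Pow {..<k})) * \<rho> ^ (3 * k)"
  proof -
    have "card SS \<le> card (Pow {..<k})"
      by (rule card_mono) (auto simp: SS_def)
    then show ?thesis by (simp add: \<rho>_def)
  qed
  also have "\<dots> = (1/32) ^ k"
  proof -
    have c: "real (card (Pow {..<k})) = 2 ^ k" by (simp add: card_Pow)
    have r3: "\<rho> ^ (3 * k) = (\<rho> ^ 3) ^ k" by (rule power_mult)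
    have "(2::real) ^ k * (\<rho> ^ 3) ^ k = (2 * \<rho> ^ 3) ^ k" by (rule power_mult_distrib[symmetric])
    moreover have "2 * \<rho> ^ 3 = 1 / 32" by (simp add: \<rho>_def power3_eq_cube)
    ultimately show ?thesis unfolding c r3 by simp
  qed
  also have "\<dots> \<le> exp (-1) ^ k"
  proof -
    have "exp 1 \<le> (3::real)" by (rule exp_le)
    then have "1/32 \<le> exp (-1::real)" by (simp add: exp_minus field_simps)
    then show ?thesis by (intro power_mono) auto
  qed
  also have "\<dots> = exp (- real k)" by (simp flip: exp_of_nat_mult)
  also have "\<dots> \<le> exp (- L)"
  proof -
    have "L \<le> b * L" using b Lpos by simp
    then show ?thesis using kL by simp
  qed
  also have "\<dots> = \<delta>" unfolding L_def using dl by (simp add: ln_div)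
  finally have bnd: "measure_pmf.prob G (UNIV - regr k -` T) \<le> \<delta>" .
  have "measure_pmf.prob (draws n k m) T = measure_pmf.prob G (regr k -` T)"
    unfolding regroup[OF n] G_def Q_def by simp
  also have "\<dots> = 1 - measure_pmf.prob G (UNIV - regr k -` T)"
  proof -
    have "UNIV - (UNIV - regr k -` T) = regr k -` T" by blast
    then show ?thesis using measure_pmf.prob_compl[of "UNIV - regr k -` T" G] by simp
  qed
  finally have "measure_pmf.prob (draws n k m) T \<ge> 1 - \<delta>" using bnd by simp
  then show ?case
    unfolding T_def k_def m_def r_def L_def by simp
qed

end
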